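(* Let $\mathcal F$ be a foam and $e$ a cyclic edge of $\mathcal F$ with both endpoints at the vertex $v$. Let $\mathcal N$ be a small regular neighbourhood of $v$ and let $\delta_+$ be an edge of the graph $\partial(\mathcal F\cap\mathcal N)$ such that exactly one endpoint of $\delta_+$ lies on $e$. Then the V-move at $v$ given by the 0-2 move along $\delta_+$ yields a foam $\mathcal F'$ with fewer cyclic edges than $\mathcal F$.
   Context: A foam in a compact connected three-manifold with boundary $M$ is the two-complex dual to an ideal triangulation of $M$. An edge loop is an edge with both ends at one vertex; a cyclic edge is an edge loop or a lift of one to a cover (here, in $\mathcal F$ itself, an edge loop). For a vertex $v$ with small regular neighbourhood $\mathcal N$, $\partial(\mathcal F\cap\mathcal N)$ is a complete graph on four vertices in the sphere $\partial\mathcal N$ whose edges are arcs in faces of $\mathcal F$. A 0-2 move along an arc $\delta$ properly embedded in a face and avoiding vertices pushes a thin neighbourhood of $\delta$ across the edges at its endpoints, creating two new vertices and a bigon face; the V-move at $v$ is the 0-2 move along one of these boundary arcs. *)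

theory Defs
  imports Main
begin

(* Combinatorial model of an ideal triangulation (and hence of its dual foam).
   Tetrahedra are numbered 0..<ntet T, each with vertices 0..3; face i of a
   tetrahedron is the face opposite vertex i.  A "face slot" (t,i) is a face of a
   tetrahedron; in the dual foam it is an END of a foam edge at the foam vertex t.
   nbr T (t,i) is the face slot glued to (t,i); gmap T (t,i) is the vertex map of
   the gluing (a permutation of 0..3 sending i to the index of the partner face). *)

datatype tri = Tri (ntet: nat) (nbr: "nat \<times> nat \<Rightarrow> nat \<times> nat")
                   (gmap: "nat \<times> nat \<Rightarrow> nat \<Rightarrow> nat")

definition Faces :: "tri \<Rightarrow> (nat \<times> nat) set" where
  "Faces T = {0..<ntet T} \<times> {0..<4}"

definition valid_gluing :: "tri \<Rightarrow> bool" where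
  "valid_gluing T \<longleftrightarrow> 0 < ntet T \<and>
     (\<forall>f\<in>Faces T. nbr T f \<in> Faces T \<and> nbr T f \<noteq> f \<and> nbr T (nbr T f) = f
        \<and> bij_betw (gmap T f) {0..<4} {0..<4}
        \<and> gmap T f (snd f) = snd (nbr T f)
        \<and> (\<forall>k<4. gmap T (nbr T f) (gmap T f k) = k))"

(* dual graph adjacency between tetrahedra (= foam vertices) *)
definition adj :: "tri \<Rightarrow> (nat \<times> nat) set" where
  "adj T = {(t, fst (nbr T (t,i))) | t i. (t,i) \<in> Faces T}"

(* identification of oriented edges (t,j,k) of tetrahedra induced by face gluings *)
definition edge_step :: "tri \<Rightarrow> ((nat \<times> nat \<times> nat) \<times> (nat \<times> nat \<times> nat)) set" where
  "edge_step T = {((t,j,k), (fst (nbr T (t,i)), gmap T (t,i) j, gmap T (t,i) k)) | t i j k.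
      (t,i) \<in> Faces T \<and> j < 4 \<and> k < 4 \<and> j \<noteq> k \<and> j \<noteq> i \<and> k \<noteq> i}"

(* A foam: the dual of an ideal triangulation of a compact connected 3-manifold
   (with boundary): finitely many tetrahedra, all faces glued in pairs,
   connected, and no edge identified with itself in reverse (this is exactly
   the condition for the truncated complex to be a 3-manifold with boundary). *)
definition is_foam :: "tri \<Rightarrow> bool" where
  "is_foam T \<longleftrightarrow> valid_gluing T \<and>
     (\<forall>t<ntet T. \<forall>t'<ntet T. (t,t') \<in> (adj T)\<^sup>*) \<and>
     (\<forall>t<ntet T. \<forall>j<4. \<forall>k<4. j \<noteq> k \<longrightarrow> ((t,j,k),(t,k,j)) \<notin> (edge_step T)\<^sup>*)"

(* foam edges are the unordered pairs of glued face slots; an edge loop (cyclic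
   edge) has both its ends at the same foam vertex *)
definition cyclic_edges :: "tri \<Rightarrow> (nat \<times> nat) set set" where
  "cyclic_edges T = {{f, nbr T f} | f. f \<in> Faces T \<and> fst (nbr T f) = fst f}"

(* V-move at foam vertex v along the arc delta of the boundary graph K4 joining the
   edge-ends a and b of v (a \<noteq> b): the 0-2 move on the faces a and b of tetrahedron
   v, which share the edge {c,d} = {0..3} - {a,b}.  Two new tetrahedra X = n, Y = n+1
   (a pillow) are inserted, with vertex labels x=0,y=1,z=2,w=3 corresponding to
   the vertices c,d,b,a of v. *)
definition vm_c :: "nat \<Rightarrow> nat \<Rightarrow> nat" where
  "vm_c a b = Min ({0..<4} - {a,b})"
definition vm_d :: "nat \<Rightarrow> nat \<Rightarrow> nat" where
  "vm_d a b = Max ({0..<4} - {a,b})"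
definition vm_tau :: "nat \<Rightarrow> nat \<Rightarrow> nat \<Rightarrow> nat" where
  "vm_tau a b k = (if k = 0 then vm_c a b else if k = 1 then vm_d a b
                   else if k = 2 then b else a)"
definition vm_tauinv :: "nat \<Rightarrow> nat \<Rightarrow> nat \<Rightarrow> nat" where
  "vm_tauinv a b k = (if k = a then 3 else if k = b then 2
                      else if k = vm_c a b then 0 else 1)"

definition vmove :: "tri \<Rightarrow> nat \<Rightarrow> nat \<Rightarrow> nat \<Rightarrow> tri" where
  "vmove T v a b =
    (let n = ntet T; X = n; Y = Suc n;
         pa = nbr T (v,a); pb = nbr T (v,b);
         nb = (\<lambda>f. if f = (v,a) then (X,3)
                  else if f = (v,b) then (X,2)
                  else if f = (X,3) then (v,a)
                  else if f = (X,2) then (v,b)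
                  else if f = (Y,3) then pa
                  else if f = (Y,2) then pb
                  else if f = pa then (Y,3)
                  else if f = pb then (Y,2)
                  else if f = (X,0) then (Y,0)
                  else if f = (Y,0) then (X,0)
                  else if f = (X,1) then (Y,1)
                  else if f = (Y,1) then (X,1)
                  else nbr T f);
         gm = (\<lambda>f. if f = (v,a) \<or> f = (v,b) then vm_tauinv a b
                  else if f = (X,3) \<or> f = (X,2) then vm_tau a b
                  else if f = (Y,3) then gmap T (v,a) \<circ> vm_tau a b
                  else if f = (Y,2) then gmap T (v,b) \<circ> vm_tau a b
                  else if f = pa then vm_tauinv a b \<circ> gmap T pa
                  else if f = pb then vm_tauinv a b \<circ> gmap T pb
                  else if f \<in> {(X,0),(Y,0),(X,1),(Y,1)} then id
                  else gmap T f)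
     in Tri (n + 2) nb gm)"

end

theory Submission imports Defs begin

lemma cd_facts: assumes "a<4" "b<4" "a\<noteq>b"
  shows "vm_c a b < 4 \<and> vm_d a b < 4 \<and> vm_c a b \<noteq> vm_d a b \<and> vm_c a b \<noteq> a \<and> vm_c a b \<noteq> b \<and> vm_d a b \<noteq> a \<and> vm_d a b \<noteq> b"
proof -
  define S where "S = {0..<4::nat} - {a,b}"
  have fin: "finite S" by (simp add: S_def)
  have "card S = card {0..<4::nat} - card {a,b}" unfolding S_def
    by (rule card_Diff_subset) (use assms in auto)
  then have cS: "card S = 2" using assms by simp
  then have ne: "S \<noteq> {}" by auto
  have mi: "Min S \<in> S" and ma: "Max S \<in> S" using fin ne by auto
  have "Min S \<noteq> Max S"
  proof
    assume eq: "Min S = Max S"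
    have "S \<subseteq> {Min S}"
    proof
      fix x assume "x \<in> S"
      then have "Min S \<le> x" "x \<le> Max S" using fin by auto
      then show "x \<in> {Min S}" using eq by auto
    qed
    then have "card S \<le> 1" using card_mono[of "{Min S}" S] by simp
    then show False using cS by simp
  qed
  then show ?thesis using mi ma unfolding vm_c_def vm_d_def S_def[symmetric] by (auto simp: S_def)
qed

lemma rtrancl_map:
  assumes "(x,y) \<in> R\<^sup>*" "\<And>u w. (u,w) \<in> R \<Longrightarrow> (g u, g w) \<in> S\<^sup>*"
  shows "(g x, g y) \<in> S\<^sup>*"
  using assms(1)
proof (induction rule: rtrancl_induct)
  case base then show ?case by simp
next
  case (step y z) then show ?case using assms(2) rtrancl_trans by metis
qed

context
  fixes T :: tri and v a b :: nat
  assumes foam: "is_foam T" and vlt: "v < ntet T" and alt: "a < 4" and blt: "b < 4"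
    and ab: "a \<noteq> b" and nab: "nbr T (v,a) \<noteq> (v,b)"
begin

abbreviation "n \<equiv> ntet T"
abbreviation "pa \<equiv> nbr T (v,a)"
abbreviation "pb \<equiv> nbr T (v,b)"
abbreviation "T' \<equiv> vmove T v a b"
abbreviation "tau \<equiv> vm_tau a b"
abbreviation "tauinv \<equiv> vm_tauinv a b"

lemma vg: "valid_gluing T" using foam is_foam_def by auto

lemma old_nbr: "f \<in> Faces T \<Longrightarrow> nbr T f \<in> Faces T \<and> nbr T f \<noteq> f \<and> nbr T (nbr T f) = f
   \<and> gmap T f (snd f) = snd (nbr T f) \<and> (\<forall>k<4. gmap T (nbr T f) (gmap T f k) = k)
   \<and> (\<forall>k<4. gmap T f k < 4)"
proof -
  assume f: "f \<in> Faces T"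
  have h: "nbr T f \<in> Faces T \<and> nbr T f \<noteq> f \<and> nbr T (nbr T f) = f
        \<and> bij_betw (gmap T f) {0..<4} {0..<4}
        \<and> gmap T f (snd f) = snd (nbr T f)
        \<and> (\<forall>k<4. gmap T (nbr T f) (gmap T f k) = k)" using vg f unfolding valid_gluing_def by blast
  have "\<forall>k<4. gmap T f k < 4"
  proof (intro allI impI)
    fix k :: nat assume "k < 4"
    then have "k \<in> {0..<4}" by simp
    then show "gmap T f k < 4" using h bij_betwE by fastforce
  qed
  with h show ?thesis by blast
qed

lemma faces_iff: "(t,i) \<in> Faces T \<longleftrightarrow> t < n \<and> i < 4" by (simp add: Faces_def)

lemma va_F: "(v,a) \<in> Faces T" and vb_F: "(v,b) \<in> Faces T"
  using vlt alt blt by (auto simp: faces_iff)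

lemma pa_F: "pa \<in> Faces T" and pb_F: "pb \<in> Faces T"
  using old_nbr va_F vb_F by auto

lemma pa_lt: "fst pa < n" and pb_lt: "fst pb < n" and pa_s: "snd pa < 4" and pb_s: "snd pb < 4"
  using pa_F pb_F by (auto simp: Faces_def)

lemma pa_ne: "pa \<noteq> pb" "pa \<noteq> (v,a)" "pb \<noteq> (v,b)" "pb \<noteq> (v,a)" "pa \<noteq> (v,b)"
  using old_nbr[OF va_F] old_nbr[OF vb_F] ab nab by (metis prod.inject)+

lemma pa_ne2: "pa \<noteq> (n,i)" "pa \<noteq> (Suc n,i)" "pb \<noteq> (n,i)" "pb \<noteq> (Suc n,i)"
  "(n,i) \<noteq> pa" "(Suc n,i) \<noteq> pa" "(n,i) \<noteq> pb" "(Suc n,i) \<noteq> pb"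
  using pa_lt pb_lt by (auto dest: arg_cong[where f=fst])

lemma cdf: "vm_c a b < 4 \<and> vm_d a b < 4 \<and> vm_c a b \<noteq> vm_d a b \<and> vm_c a b \<noteq> a \<and> vm_c a b \<noteq> b \<and> vm_d a b \<noteq> a \<and> vm_d a b \<noteq> b"
  using cd_facts alt blt ab by blast

lemma tau_lt: "k < 4 \<Longrightarrow> tau k < 4" and tauinv_lt: "tauinv k < 4"
  using cdf alt blt by (auto simp: vm_tau_def vm_tauinv_def)

lemma tau_inv1: "k < 4 \<Longrightarrow> tauinv (tau k) = k"
  using cdf ab by (auto simp: vm_tau_def vm_tauinv_def)

lemma tau_inv2: "k < 4 \<Longrightarrow> tau (tauinv k) = k"
proof -
  assume k: "k < 4"
  have "k \<in> {0..<4}" using k by simp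
  moreover have "{0..<4::nat} = {a,b,vm_c a b, vm_d a b}"
  proof -
    have "{a,b,vm_c a b, vm_d a b} \<subseteq> {0..<4::nat}" using cdf alt blt by auto
    moreover have "card {a,b,vm_c a b, vm_d a b} = 4" using cdf ab by auto
    ultimately show ?thesis by (metis card_atLeastLessThan card_subset_eq diff_zero finite_atLeastLessThan)
  qed
  ultimately show ?thesis using cdf ab by (auto simp: vm_tau_def vm_tauinv_def)
qed

lemma tau_a: "tau 3 = a" and tau_b: "tau 2 = b" and tauinv_a: "tauinv a = 3" and tauinv_b: "tauinv b = 2"
  using ab by (auto simp: vm_tau_def vm_tauinv_def)

lemma tau_ne_a: "j < 4 \<Longrightarrow> j \<noteq> 3 \<Longrightarrow> tau j \<noteq> a"
  and tau_ne_b: "j < 4 \<Longrightarrow> j \<noteq> 2 \<Longrightarrow> tau j \<noteq> b"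
proof -
  show "j < 4 \<Longrightarrow> j \<noteq> 3 \<Longrightarrow> tau j \<noteq> a" using tau_inv1[of j] tauinv_a by auto
  show "j < 4 \<Longrightarrow> j \<noteq> 2 \<Longrightarrow> tau j \<noteq> b" using tau_inv1[of j] tauinv_b by auto
qed

lemma tau_inj: "j < 4 \<Longrightarrow> k < 4 \<Longrightarrow> tau j = tau k \<Longrightarrow> j = k"
  using tau_inv1 by metis

lemma ntet': "ntet T' = n + 2" by (simp add: vmove_def Let_def)

lemmas vmd = vmove_def Let_def

lemma nb_va: "nbr T' (v,a) = (n,3)" by (simp add: vmd)
lemma nb_vb: "nbr T' (v,b) = (n,2)" using ab by (simp add: vmd)
lemma nb_X3: "nbr T' (n,3) = (v,a)" using vlt by (simp add: vmd)
lemma nb_X2: "nbr T' (n,2) = (v,b)" using vlt by (simp add: vmd)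
lemma nb_Y3: "nbr T' (Suc n,3) = pa" using vlt by (simp add: vmd)
lemma nb_Y2: "nbr T' (Suc n,2) = pb" using vlt by (simp add: vmd)
lemma nb_pa: "nbr T' pa = (Suc n,3)" using vlt pa_ne pa_lt by (auto simp: vmd)
lemma nb_pb: "nbr T' pb = (Suc n,2)" using vlt pa_ne pb_lt by (auto simp: vmd)
lemma nb_X0: "nbr T' (n,0) = (Suc n,0)" using vlt pa_ne pa_ne2 by (auto simp: vmd)
lemma nb_Y0: "nbr T' (Suc n,0) = (n,0)" using vlt pa_ne pa_ne2 by (auto simp: vmd)
lemma nb_X1: "nbr T' (n,1) = (Suc n,1)" using vlt pa_ne pa_ne2 by (auto simp: vmd)
lemma nb_Y1: "nbr T' (Suc n,1) = (n,1)" using vlt pa_ne pa_ne2 by (auto simp: vmd)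
lemma nb_old: "fst f < n \<Longrightarrow> f \<notin> {(v,a),(v,b),pa,pb} \<Longrightarrow> nbr T' f = nbr T f"
  by (cases f) (auto simp: vmd)

lemma gm_va: "gmap T' (v,a) = tauinv" by (simp add: vmd)
lemma gm_vb: "gmap T' (v,b) = tauinv" by (simp add: vmd)
lemma gm_X3: "gmap T' (n,3) = tau" using vlt by (simp add: vmd)
lemma gm_X2: "gmap T' (n,2) = tau" using vlt by (simp add: vmd)
lemma gm_Y3: "gmap T' (Suc n,3) = gmap T (v,a) \<circ> tau" using vlt by (simp add: vmd)
lemma gm_Y2: "gmap T' (Suc n,2) = gmap T (v,b) \<circ> tau" using vlt by (simp add: vmd)
lemma gm_pa: "gmap T' pa = tauinv \<circ> gmap T pa" using vlt pa_ne pa_lt by (auto simp: vmd)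
lemma gm_pb: "gmap T' pb = tauinv \<circ> gmap T pb" using vlt pa_ne pb_lt by (auto simp: vmd)
lemma gm_XY: "gmap T' (n,0) = id" "gmap T' (Suc n,0) = id" "gmap T' (n,1) = id" "gmap T' (Suc n,1) = id"
  using vlt pa_ne pa_ne2 by (auto simp: vmd)
lemma gm_old: "fst f < n \<Longrightarrow> f \<notin> {(v,a),(v,b),pa,pb} \<Longrightarrow> gmap T' f = gmap T f"
  by (cases f) (auto simp: vmd)


lemma faces': "(t,i) \<in> Faces T' \<longleftrightarrow> t < n + 2 \<and> i < 4" by (simp add: Faces_def ntet')

definition Pf :: "nat \<times> nat \<Rightarrow> bool" where
  "Pf f \<longleftrightarrow> nbr T' f \<in> Faces T' \<and> nbr T' f \<noteq> f \<and> nbr T' (nbr T' f) = f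
      \<and> gmap T' f (snd f) = snd (nbr T' f) \<and> (\<forall>k<4. gmap T' f k < 4)
      \<and> (\<forall>k<4. gmap T' (nbr T' f) (gmap T' f k) = k)"

lemma pa_info: "nbr T pa = (v,a)" "gmap T (v,a) a = snd pa" "\<forall>k<4. gmap T pa (gmap T (v,a) k) = k"
   "\<forall>k<4. gmap T (v,a) (gmap T pa k) = k" "\<forall>k<4. gmap T (v,a) k < 4" "\<forall>k<4. gmap T pa k < 4"
   "gmap T pa (snd pa) = a"
  using old_nbr[OF va_F] old_nbr[OF pa_F] by auto
lemma pb_info: "nbr T pb = (v,b)" "gmap T (v,b) b = snd pb" "\<forall>k<4. gmap T pb (gmap T (v,b) k) = k"
   "\<forall>k<4. gmap T (v,b) (gmap T pb k) = k" "\<forall>k<4. gmap T (v,b) k < 4" "\<forall>k<4. gmap T pb k < 4"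
   "gmap T pb (snd pb) = b"
  using old_nbr[OF vb_F] old_nbr[OF pb_F] by auto

lemma vlt': "v < n + 2" using vlt by simp
lemma pa_F': "pa \<in> Faces T'" and pb_F': "pb \<in> Faces T'"
  using pa_lt pa_s pb_lt pb_s faces'[of "fst pa" "snd pa"] faces'[of "fst pb" "snd pb"] by auto

lemma P_va: "Pf (v,a)" unfolding Pf_def using vlt alt
  by (auto simp: nb_va nb_X3 gm_va gm_X3 faces' tauinv_a tauinv_lt tau_inv2)
lemma P_vb: "Pf (v,b)" unfolding Pf_def using vlt blt
  by (auto simp: nb_vb nb_X2 gm_vb gm_X2 faces' tauinv_b tauinv_lt tau_inv2)
lemma P_X3: "Pf (n,3)" unfolding Pf_def using vlt alt
  by (auto simp: nb_va nb_X3 gm_va gm_X3 faces' tau_a tau_lt tau_inv1)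
lemma P_X2: "Pf (n,2)" unfolding Pf_def using vlt blt
  by (auto simp: nb_vb nb_X2 gm_vb gm_X2 faces' tau_b tau_lt tau_inv1)
lemma P_Y3: "Pf (Suc n,3)" unfolding Pf_def using pa_F' pa_ne2 pa_info
  by (auto simp: nb_Y3 nb_pa gm_Y3 gm_pa faces' tau_a tau_lt tau_inv1)
lemma P_Y2: "Pf (Suc n,2)" unfolding Pf_def using pb_F' pa_ne2 pb_info
  by (auto simp: nb_Y2 nb_pb gm_Y2 gm_pb faces' tau_b tau_lt tau_inv1)
lemma P_pa: "Pf pa" unfolding Pf_def using pa_F' pa_ne2 pa_info
  by (auto simp: nb_Y3 nb_pa gm_Y3 gm_pa faces' tauinv_a tauinv_lt tau_inv2)
lemma P_pb: "Pf pb" unfolding Pf_def using pb_F' pa_ne2 pb_info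
  by (auto simp: nb_Y2 nb_pb gm_Y2 gm_pb faces' tauinv_b tauinv_lt tau_inv2)
lemma P_XY: "Pf (n,0)" "Pf (n,1)" "Pf (Suc n,0)" "Pf (Suc n,1)"
  unfolding Pf_def nb_X0 nb_X1 nb_Y0 nb_Y1 gm_XY by (auto simp: faces')

abbreviation gen :: "nat \<times> nat \<Rightarrow> bool" where
  "gen f \<equiv> f \<in> Faces T \<and> f \<notin> {(v,a),(v,b),pa,pb}"

lemma gen_nbr: "gen f \<Longrightarrow> gen (nbr T f)"
  using old_nbr[of f] pa_info pb_info by auto

lemma gen_lt: "gen f \<Longrightarrow> fst f < n" by (cases f) (auto simp: faces_iff)

lemma P_gen: assumes "gen f" shows "Pf f"
proof -
  have g2: "gen (nbr T f)" using gen_nbr assms by blast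
  have o: "nbr T f \<in> Faces T \<and> nbr T f \<noteq> f \<and> nbr T (nbr T f) = f
   \<and> gmap T f (snd f) = snd (nbr T f) \<and> (\<forall>k<4. gmap T (nbr T f) (gmap T f k) = k)
   \<and> (\<forall>k<4. gmap T f k < 4)" using old_nbr assms by blast
  have e1: "nbr T' f = nbr T f" "gmap T' f = gmap T f" using nb_old gm_old gen_lt assms by auto
  have e2: "nbr T' (nbr T f) = nbr T (nbr T f)" "gmap T' (nbr T f) = gmap T (nbr T f)"
    using nb_old gm_old gen_lt g2 by auto
  have "nbr T f \<in> Faces T'" using g2 by (cases "nbr T f") (auto simp: faces_iff faces')
  then show ?thesis using o e1 e2 unfolding Pf_def by simp
qed

lemma classify: "f \<in> Faces T' \<Longrightarrow> gen f \<or> f \<in> {(v,a),(v,b),pa,pb} \<or>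
   f \<in> {(n,0),(n,1),(n,2),(n,3),(Suc n,0),(Suc n,1),(Suc n,2),(Suc n,3)}"
proof -
  assume "f \<in> Faces T'"
  then obtain t i where f: "f = (t,i)" "t < n+2" "i < 4" by (cases f) (auto simp: faces')
  consider "t < n" | "t = n" | "t = Suc n" using f by linarith
  then show ?thesis
  proof cases
    case 1 then show ?thesis using f by (auto simp: faces_iff)
  next
    case 2 then show ?thesis using f by (auto simp: less_Suc_eq numeral_eq_Suc)
  next
    case 3 then show ?thesis using f by (auto simp: less_Suc_eq numeral_eq_Suc)
  qed
qed

lemma P_all: "f \<in> Faces T' \<Longrightarrow> Pf f"
  using classify[of f] P_gen P_va P_vb P_pa P_pb P_XY P_X2 P_X3 P_Y2 P_Y3 by blast

lemma valid': "valid_gluing T'"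
  unfolding valid_gluing_def
proof (intro conjI ballI)
  show "0 < ntet T'" by (simp add: ntet')
  fix f assume f: "f \<in> Faces T'"
  have P1: "Pf f" using P_all f .
  have P2: "Pf (nbr T' f)" using P_all P1 unfolding Pf_def by blast
  note P1 = P1[unfolded Pf_def] and P2 = P2[unfolded Pf_def]
  show "nbr T' f \<in> Faces T'" "nbr T' f \<noteq> f" "nbr T' (nbr T' f) = f"
    "gmap T' f (snd f) = snd (nbr T' f)" "\<forall>k<4. gmap T' (nbr T' f) (gmap T' f k) = k"
    using P1 by auto
  show "bij_betw (gmap T' f) {0..<4} {0..<4}"
    by (rule bij_betw_byWitness[where f'="gmap T' (nbr T' f)"]) (use P1 P2 in auto)
qed


lemma adj_I: "(t,i) \<in> Faces T' \<Longrightarrow> (t, fst (nbr T' (t,i))) \<in> adj T'"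
  by (auto simp: adj_def)

lemma XY_F: "(n,i) \<in> Faces T'" "(Suc n,i) \<in> Faces T'" if "i < 4" using that by (auto simp: faces')
lemma va_F': "(v,a) \<in> Faces T'" and vb_F': "(v,b) \<in> Faces T'" using vlt alt blt by (auto simp: faces')

lemma adj_old: assumes "(x,y) \<in> adj T" shows "(x,y) \<in> (adj T')\<^sup>*"
proof -
  obtain t i where ti: "x = t" "y = fst (nbr T (t,i))" "(t,i) \<in> Faces T" using assms by (auto simp: adj_def)
  have s1: "(v,n) \<in> adj T'" using adj_I[OF va_F'] by (simp add: nb_va)
  have s2: "(n,Suc n) \<in> adj T'" using adj_I[OF XY_F(1)[of 0]] by (simp add: nb_X0)
  have s3: "(Suc n, fst pa) \<in> adj T'" using adj_I[OF XY_F(2)[of 3]] by (simp add: nb_Y3)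
  have s4: "(Suc n, fst pb) \<in> adj T'" using adj_I[OF XY_F(2)[of 2]] by (simp add: nb_Y2)
  have s5: "(fst pa, Suc n) \<in> adj T'" using adj_I[of "fst pa" "snd pa"] pa_F' by (simp add: nb_pa)
  have s6: "(fst pb, Suc n) \<in> adj T'" using adj_I[of "fst pb" "snd pb"] pb_F' by (simp add: nb_pb)
  have s7: "(Suc n, n) \<in> adj T'" using adj_I[OF XY_F(2)[of 0]] by (simp add: nb_Y0)
  have s8: "(n, v) \<in> adj T'" using adj_I[OF XY_F(1)[of 3]] by (simp add: nb_X3)
  have "gen (t,i) \<or> (t,i) \<in> {(v,a),(v,b),pa,pb}" using ti by blast
  then show ?thesis
  proof
    assume g: "gen (t,i)"
    then have "(t,i) \<in> Faces T'" by (auto simp: faces_iff faces')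
    then show ?thesis using adj_I[of t i] nb_old[of "(t,i)"] g gen_lt[OF g] ti by auto
  next
    assume "(t,i) \<in> {(v,a),(v,b),pa,pb}"
    then consider "(t,i) = (v,a)" | "(t,i) = (v,b)" | "(t,i) = pa" | "(t,i) = pb" by blast
    then show ?thesis
    proof cases
      case 1 then show ?thesis using ti s1 s2 s3 by (auto intro: rtrancl_into_rtrancl)
    next
      case 2 then show ?thesis using ti s1 s2 s4 by (auto intro: rtrancl_into_rtrancl)
    next
      case 3 then have "x = fst pa" "y = v" using ti pa_info by (auto dest: arg_cong[where f=fst])
      then show ?thesis using s5 s7 s8 by (auto intro: rtrancl_into_rtrancl)
    next
      case 4 then have "x = fst pb" "y = v" using ti pb_info by (auto dest: arg_cong[where f=fst])
      then show ?thesis using s6 s7 s8 by (auto intro: rtrancl_into_rtrancl)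
    qed
  qed
qed

lemma conn_v: "t < n + 2 \<Longrightarrow> (t,v) \<in> (adj T')\<^sup>* \<and> (v,t) \<in> (adj T')\<^sup>*"
proof -
  assume t: "t < n + 2"
  have s1: "(v,n) \<in> adj T'" using adj_I[OF va_F'] by (simp add: nb_va)
  have s2: "(n,Suc n) \<in> adj T'" using adj_I[OF XY_F(1)[of 0]] by (simp add: nb_X0)
  have s7: "(Suc n, n) \<in> adj T'" using adj_I[OF XY_F(2)[of 0]] by (simp add: nb_Y0)
  have s8: "(n, v) \<in> adj T'" using adj_I[OF XY_F(1)[of 3]] by (simp add: nb_X3)
  consider "t < n" | "t = n" | "t = Suc n" using t by linarith
  then show ?thesis
  proof cases
    case 1
    have c: "(t,v) \<in> (adj T)\<^sup>*" "(v,t) \<in> (adj T)\<^sup>*" using foam 1 vlt unfolding is_foam_def by blast+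
    show ?thesis using rtrancl_map[OF c(1), where g=id and S="adj T'"] rtrancl_map[OF c(2), where g=id and S="adj T'"] adj_old by auto
  next
    case 2 then show ?thesis using s1 s8 by auto
  next
    case 3 then show ?thesis using s1 s2 s7 s8 by (meson converse_rtrancl_into_rtrancl r_into_rtrancl rtrancl_into_rtrancl)
  qed
qed

lemma conn': "\<forall>t<ntet T'. \<forall>t'<ntet T'. (t,t') \<in> (adj T')\<^sup>*"
  using conn_v rtrancl_trans ntet' by metis

definition phi :: "nat \<times> nat \<times> nat \<Rightarrow> nat \<times> nat \<times> nat" where
  "phi x = (case x of (t,j,k) \<Rightarrow> if t < n then (t,j,k) else (v, tau j, tau k))"

lemma es_I: "(t,i) \<in> Faces T \<Longrightarrow> j<4 \<Longrightarrow> k<4 \<Longrightarrow> j\<noteq>k \<Longrightarrow> j\<noteq>i \<Longrightarrow> k\<noteq>i \<Longrightarrow>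
  ((t,j,k),(fst (nbr T (t,i)), gmap T (t,i) j, gmap T (t,i) k)) \<in> edge_step T"
  unfolding edge_step_def by blast

lemma es_map: assumes "(x,y) \<in> edge_step T'" shows "(phi x, phi y) \<in> (edge_step T)\<^sup>*"
proof -
  obtain t i j k where xy: "x = (t,j,k)" "y = (fst (nbr T' (t,i)), gmap T' (t,i) j, gmap T' (t,i) k)"
    and c: "(t,i) \<in> Faces T'" "j<4" "k<4" "j\<noteq>k" "j\<noteq>i" "k\<noteq>i"
    using assms unfolding edge_step_def by blast
  have pxo: "t < n \<Longrightarrow> phi x = x" by (simp add: xy phi_def)
  consider "gen (t,i)" | "(t,i) = (v,a)" | "(t,i) = (v,b)" | "(t,i) = pa" | "(t,i) = pb"
    | "(t,i) = (n,3)" | "(t,i) = (n,2)" | "(t,i) = (Suc n,3)" | "(t,i) = (Suc n,2)"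
    | "t = n \<or> t = Suc n" "i < 2"
    using classify[OF c(1)] by auto
  then show ?thesis
  proof cases
    case 1
    have "t < n" using gen_lt[OF 1] by simp
    moreover have "fst (nbr T (t,i)) < n" using old_nbr[of "(t,i)"] 1 by (cases "nbr T (t,i)") (auto simp: faces_iff)
    ultimately show ?thesis using es_I[of t i j k] c 1 nb_old[of "(t,i)"] gm_old[of "(t,i)"]
      by (auto simp: xy phi_def)
  next
    case 2 then show ?thesis using c vlt by (auto simp: xy phi_def nb_va gm_va tau_inv2)
  next
    case 3 then show ?thesis using c vlt by (auto simp: xy phi_def nb_vb gm_vb tau_inv2)
  next
    case 4
    have "t = fst pa" using 4 by (metis fst_conv)
    then have "t < n" using pa_lt by simp
    moreover have "phi y = (v, gmap T pa j, gmap T pa k)"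
      using 4 pa_info c vlt by (auto simp: xy phi_def nb_pa gm_pa tau_inv2)
    moreover have "(x, (v, gmap T pa j, gmap T pa k)) \<in> edge_step T"
      using es_I[of t i j k] c 4 pa_info pa_F by (simp add: xy)
    ultimately show ?thesis using pxo by auto
  next
    case 5
    have "t = fst pb" using 5 by (metis fst_conv)
    then have "t < n" using pb_lt by simp
    moreover have "phi y = (v, gmap T pb j, gmap T pb k)"
      using 5 pb_info c vlt by (auto simp: xy phi_def nb_pb gm_pb tau_inv2)
    moreover have "(x, (v, gmap T pb j, gmap T pb k)) \<in> edge_step T"
      using es_I[of t i j k] c 5 pb_info pb_F by (simp add: xy)
    ultimately show ?thesis using pxo by auto
  next
    case 6 then show ?thesis using c vlt by (auto simp: xy phi_def nb_X3 gm_X3)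
  next
    case 7 then show ?thesis using c vlt by (auto simp: xy phi_def nb_X2 gm_X2)
  next
    case 8
    have "phi x = (v, tau j, tau k)" using 8 by (auto simp: xy phi_def)
    moreover have "phi y = (fst pa, gmap T (v,a) (tau j), gmap T (v,a) (tau k))"
      using 8 pa_lt by (auto simp: xy phi_def nb_Y3 gm_Y3)
    moreover have "((v, tau j, tau k), (fst pa, gmap T (v,a) (tau j), gmap T (v,a) (tau k))) \<in> edge_step T"
    proof -
      have i: "i = 3" using 8 by simp
      have "tau j < 4" "tau k < 4" using c tau_lt by auto
      moreover have "tau j \<noteq> tau k" using c tau_inj by blast
      moreover have "tau j \<noteq> a" "tau k \<noteq> a" using c i tau_ne_a by auto
      ultimately show ?thesis using es_I[OF va_F] by blast
    qed
    ultimately show ?thesis by auto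
  next
    case 9
    have "phi x = (v, tau j, tau k)" using 9 by (auto simp: xy phi_def)
    moreover have "phi y = (fst pb, gmap T (v,b) (tau j), gmap T (v,b) (tau k))"
      using 9 pb_lt by (auto simp: xy phi_def nb_Y2 gm_Y2)
    moreover have "((v, tau j, tau k), (fst pb, gmap T (v,b) (tau j), gmap T (v,b) (tau k))) \<in> edge_step T"
    proof -
      have i: "i = 2" using 9 by simp
      have "tau j < 4" "tau k < 4" using c tau_lt by auto
      moreover have "tau j \<noteq> tau k" using c tau_inj by blast
      moreover have "tau j \<noteq> b" "tau k \<noteq> b" using c i tau_ne_b by auto
      ultimately show ?thesis using es_I[OF vb_F] by blast
    qed
    ultimately show ?thesis by auto
  next
    case 10
    then have "i = 0 \<or> i = 1" by auto
    then show ?thesis using 10 by (auto simp: xy phi_def nb_X0 nb_X1 nb_Y0 nb_Y1 gm_XY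
       nb_X1[unfolded One_nat_def] nb_Y1[unfolded One_nat_def] gm_XY[unfolded One_nat_def])
  qed
qed

lemma noflip': "\<forall>t<ntet T'. \<forall>j<4. \<forall>k<4. j \<noteq> k \<longrightarrow> ((t,j,k),(t,k,j)) \<notin> (edge_step T')\<^sup>*"
proof (intro allI impI notI)
  fix t j k assume t: "t < ntet T'" and jk: "j < 4" "k < 4" "j \<noteq> k"
    and r: "((t,j,k),(t,k,j)) \<in> (edge_step T')\<^sup>*"
  have m: "(phi (t,j,k), phi (t,k,j)) \<in> (edge_step T)\<^sup>*" by (rule rtrancl_map[OF r es_map])
  have old: "\<forall>t<n. \<forall>j<4. \<forall>k<4. j \<noteq> k \<longrightarrow> ((t,j,k),(t,k,j)) \<notin> (edge_step T)\<^sup>*"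
    using foam unfolding is_foam_def by blast
  show False
  proof (cases "t < n")
    case True then show False using m old jk by (simp add: phi_def)
  next
    case False
    then have "((v, tau j, tau k), (v, tau k, tau j)) \<in> (edge_step T)\<^sup>*" using m by (simp add: phi_def)
    moreover have "tau j < 4" "tau k < 4" "tau j \<noteq> tau k" using jk tau_lt tau_inj by auto
    ultimately show False using old vlt by blast
  qed
qed

theorem foam': "is_foam T'"
  unfolding is_foam_def using valid' conn' noflip' by blast

lemma cyc_gen: "f \<in> Faces T' \<Longrightarrow> fst (nbr T' f) = fst f \<Longrightarrow> gen f"
proof -
  assume f: "f \<in> Faces T'" and e: "fst (nbr T' f) = fst f"
  have "fst pa \<noteq> Suc n" "fst pb \<noteq> Suc n" "v \<noteq> n" using pa_lt pb_lt vlt by auto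
  then have ne: "fst (nbr T' g) \<noteq> fst g" if "g \<in> {(v,a),(v,b),pa,pb} \<or>
   g \<in> {(n,0),(n,1),(n,2),(n,3),(Suc n,0),(Suc n,1),(Suc n,2),(Suc n,3)}" for g
    using that
    apply (elim disjE insertE emptyE)
    apply (simp_all only: nb_va nb_vb nb_pa nb_pb nb_X0 nb_X1 nb_X2 nb_X3 nb_Y0 nb_Y1 nb_Y2 nb_Y3 fst_conv)
    apply simp_all
    done
  show "gen f" using classify[OF f] ne e by blast
qed

lemma cyc_sub: "X \<in> cyclic_edges T' \<Longrightarrow> X \<in> cyclic_edges T \<and> X \<inter> {(v,a),(v,b),pa,pb} = {}"
proof -
  assume "X \<in> cyclic_edges T'"
  then obtain f where f: "X = {f, nbr T' f}" "f \<in> Faces T'" "fst (nbr T' f) = fst f"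
    unfolding cyclic_edges_def by blast
  have g: "gen f" using cyc_gen f by blast
  have g2: "gen (nbr T f)" using gen_nbr g by blast
  have e: "nbr T' f = nbr T f" using nb_old g gen_lt by auto
  have f2: "X = {f, nbr T f}" "f \<in> Faces T" "fst (nbr T f) = fst f" using f g e by simp_all
  have "X \<in> cyclic_edges T" unfolding cyclic_edges_def using f2 by blast
  moreover have "X \<inter> {(v,a),(v,b),pa,pb} = {}" using f(1) e g g2 by auto
  ultimately show ?thesis by blast
qed

end

theorem mainTheorem6:
  fixes T :: tri and v p q a b :: nat
  assumes "is_foam T"
    and "v < ntet T"
    and "p < 4" and "q < 4" and "p \<noteq> q" and "nbr T (v,p) = (v,q)"
    and "a < 4" and "b < 4" and "a \<noteq> b"
    and "card ({a,b} \<inter> {p,q}) = 1"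
  shows "is_foam (vmove T v a b) \<and>
         card (cyclic_edges (vmove T v a b)) < card (cyclic_edges T)"
proof -
  have vg: "valid_gluing T" using assms(1) is_foam_def by auto
  have vpF: "(v,p) \<in> Faces T" using assms by (simp add: Faces_def)
  have qp: "nbr T (v,q) = (v,p)" using vg vpF assms(6) unfolding valid_gluing_def by metis
  have cases: "(a \<in> {p,q} \<and> b \<notin> {p,q}) \<or> (b \<in> {p,q} \<and> a \<notin> {p,q})"
  proof (rule ccontr)
    assume "\<not> ?thesis"
    then have "{a,b} \<inter> {p,q} = {a,b} \<or> {a,b} \<inter> {p,q} = {}" by auto
    then show False using assms(9,10) by auto
  qed
  have nab: "nbr T (v,a) \<noteq> (v,b)"
  proof
    assume h: "nbr T (v,a) = (v,b)"
    show False using cases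
    proof
      assume c: "a \<in> {p,q} \<and> b \<notin> {p,q}"
      then show False using h assms(6) qp by auto
    next
      assume c: "b \<in> {p,q} \<and> a \<notin> {p,q}"
      have "(v,a) \<in> Faces T" using assms by (simp add: Faces_def)
      then have "nbr T (v,b) = (v,a)" using vg h unfolding valid_gluing_def by metis
      then show False using c assms(6) qp by auto
    qed
  qed
  have sp: "(v,p) \<in> {(v,a),(v,b),nbr T (v,a),nbr T (v,b)}" using cases qp by auto
  define E where "E = {(v,p),(v,q)}"
  have E: "E \<in> cyclic_edges T" unfolding E_def cyclic_edges_def using vpF assms(6) by force
  have sub: "cyclic_edges (vmove T v a b) \<subseteq> cyclic_edges T - {E}"
  proof
    fix X assume "X \<in> cyclic_edges (vmove T v a b)"
    from cyc_sub[OF assms(1,2,7,8,9) nab this]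
    have "X \<in> cyclic_edges T" "X \<inter> {(v,a),(v,b),nbr T (v,a),nbr T (v,b)} = {}" by auto
    moreover have "X \<noteq> E" using calculation(2) sp unfolding E_def by auto
    ultimately show "X \<in> cyclic_edges T - {E}" by blast
  qed
  have fin: "finite (cyclic_edges T)"
  proof (rule finite_subset)
    show "cyclic_edges T \<subseteq> (\<lambda>f. {f, nbr T f}) ` Faces T" unfolding cyclic_edges_def by blast
    show "finite ((\<lambda>f. {f, nbr T f}) ` Faces T)" by (simp add: Faces_def)
  qed
  have "card (cyclic_edges (vmove T v a b)) \<le> card (cyclic_edges T - {E})"
    using sub fin by (simp add: card_mono)
  also have "\<dots> < card (cyclic_edges T)" by (rule card_Diff1_less[OF fin E])
  finally show ?thesis using foam'[OF assms(1,2,7,8,9) nab] by blast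
qed

end
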